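(* $\mathsf{SquaMS}$ has no final object.
   Context: Let $M_0=\{(r,s)\in[0,1]^2: r\in\{0,1\}\text{ or } s\in\{0,1\}\}$. A square metric space is a pair $(X,S_X)$ with $X$ a metric space with all distances at most $2$ and $S_X\colon M_0\to X$ injective such that (sq1) for $i\in\{0,1\}$, $r,s\in[0,1]$: $d_X(S_X(i,r),S_X(i,s))=|s-r|$ and $d_X(S_X(r,i),S_X(s,i))=|s-r|$; (sq2) $d_X(S_X(r,s),S_X(t,u))\ge|r-t|+|s-u|$ for all $(r,s),(t,u)\in M_0$. $\mathsf{SquaMS}$ has these as objects and short maps $f\colon X\to Y$ with $f\circ S_X=S_Y$ as morphisms. *)

theory Defs
  imports "HOL-Analysis.Analysis"
begin

definition M0 :: "(real \<times> real) set" where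
  "M0 = {(r, s). r \<in> {0..1} \<and> s \<in> {0..1} \<and> (r \<in> {0, 1} \<or> s \<in> {0, 1})}"

definition square_ms :: "'a metric \<Rightarrow> (real \<times> real \<Rightarrow> 'a) \<Rightarrow> bool" where
  "square_ms X S \<longleftrightarrow>
     (\<forall>x\<in>mspace X. \<forall>y\<in>mspace X. mdist X x y \<le> 2) \<and>
     S ` M0 \<subseteq> mspace X \<and> inj_on S M0 \<and>
     (\<forall>i\<in>{0::real, 1}. \<forall>r\<in>{0..1}. \<forall>s\<in>{0..1}.
        mdist X (S (i, r)) (S (i, s)) = \<bar>s - r\<bar> \<and>
        mdist X (S (r, i)) (S (s, i)) = \<bar>s - r\<bar>) \<and>
     (\<forall>r s t u. (r, s) \<in> M0 \<longrightarrow> (t, u) \<in> M0 \<longrightarrow>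
        mdist X (S (r, s)) (S (t, u)) \<ge> \<bar>r - t\<bar> + \<bar>s - u\<bar>)"

text \<open>Morphisms of SquaMS: short maps commuting with the square embeddings
  (maps are considered on the carrier only).\<close>
definition squams_hom ::
  "'a metric \<Rightarrow> (real \<times> real \<Rightarrow> 'a) \<Rightarrow> 'b metric \<Rightarrow> (real \<times> real \<Rightarrow> 'b) \<Rightarrow> ('a \<Rightarrow> 'b) \<Rightarrow> bool" where
  "squams_hom X SX Y SY f \<longleftrightarrow>
     f \<in> mspace X \<rightarrow> mspace Y \<and>
     (\<forall>x\<in>mspace X. \<forall>y\<in>mspace X. mdist Y (f x) (f y) \<le> mdist X x y) \<and>
     (\<forall>p\<in>M0. f (SX p) = SY p)"

text \<open>(T, ST) is final with respect to all square metric spaces whose points live in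
  the type 'a: for each such object there is exactly one morphism into (T, ST)
  (uniqueness as functions on the carrier).\<close>
definition squams_final_wrt :: "'a itself \<Rightarrow> 'b metric \<Rightarrow> (real \<times> real \<Rightarrow> 'b) \<Rightarrow> bool" where
  "squams_final_wrt _ T ST \<longleftrightarrow>
     (\<forall>(X::'a metric) SX. square_ms X SX \<longrightarrow>
        (\<exists>f. squams_hom X SX T ST f) \<and>
        (\<forall>f g. squams_hom X SX T ST f \<longrightarrow> squams_hom X SX T ST g \<longrightarrow>
               (\<forall>x\<in>mspace X. f x = g x)))"

end

theory Submission
  imports Defs
begin

definition optd :: "'b metric \<Rightarrow> 'b option \<Rightarrow> 'b option \<Rightarrow> real" where
  "optd T x y = (case x of None \<Rightarrow> (case y of None \<Rightarrow> 0 | Some _ \<Rightarrow> 2)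
      | Some a \<Rightarrow> (case y of None \<Rightarrow> 2 | Some b \<Rightarrow> mdist T a b))"

definition optM :: "'b metric \<Rightarrow> 'b option set" where
  "optM T = insert None (Some ` mspace T)"

lemma optd_simps[simp]:
  "optd T None None = 0" "optd T None (Some a) = 2" "optd T (Some a) None = 2"
  "optd T (Some a) (Some b) = mdist T a b"
  by (simp_all add: optd_def)

lemma opt_Metric:
  fixes T :: "'a metric"
  assumes bd: "\<forall>x\<in>mspace T. \<forall>y\<in>mspace T. mdist T x y \<le> 2"
  shows "Metric_space (optM T) (optd T)"
proof
  fix x y :: "'a option"
  show "0 \<le> optd T x y" by (cases x; cases y; simp)
  show "optd T x y = optd T y x" by (cases x; cases y; simp add: mdist_commute)
next
  fix x y :: "'a option"
  assume "x \<in> optM T" "y \<in> optM T"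
  then show "(optd T x y = 0) = (x = y)" by (cases x; cases y; auto simp: optM_def)
next
  fix x y z :: "'a option"
  assume "x \<in> optM T" "y \<in> optM T" "z \<in> optM T"
  then show "optd T x z \<le> optd T x y + optd T y z"
    using bd by (cases x; cases y; cases z; auto simp: optM_def intro: mdist_triangle add_increasing; smt (verit, best) mdist_nonneg)
qed

definition fc :: "'b \<Rightarrow> 'b option \<Rightarrow> 'b" where
  "fc c z = (case z of None \<Rightarrow> c | Some x \<Rightarrow> x)"

theorem mainTheorem20:
  fixes T :: "'b metric" and ST :: "real \<times> real \<Rightarrow> 'b"
  assumes "square_ms T ST"
  shows "\<not> squams_final_wrt TYPE('b option) T ST"
proof
  assume fin: "squams_final_wrt TYPE('b option) T ST"
  have bd: "\<forall>x\<in>mspace T. \<forall>y\<in>mspace T. mdist T x y \<le> 2"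
    using assms by (simp add: square_ms_def)
  interpret MS: Metric_space "optM T" "optd T" using opt_Metric[OF bd] .
  define X where "X = metric (optM T, optd T)"
  have sp: "mspace X = optM T" and md: "mdist X = optd T" by (simp_all add: X_def)
  define SX where "SX = Some \<circ> ST"
  have sqX: "square_ms X SX"
    using assms unfolding square_ms_def sp md SX_def optM_def
    apply (intro conjI)
    apply (auto simp: inj_on_def)
    done
  have M00: "(0,0) \<in> M0" and M10: "(1,0) \<in> M0" by (auto simp: M0_def)
  have ST_in: "ST p \<in> mspace T" if "p \<in> M0" for p using assms that by (auto simp: square_ms_def)
  have neq: "ST (0,0) \<noteq> ST (1,0)"
    using assms M00 M10 unfolding square_ms_def inj_on_def by (metis prod.inject zero_neq_one)
  have hom: "squams_hom X SX T ST (fc c)" if c: "c \<in> mspace T" for c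
    unfolding squams_hom_def sp md
  proof (intro conjI)
    show "fc c \<in> optM T \<rightarrow> mspace T" using c by (auto simp: optM_def fc_def)
    show "\<forall>x\<in>optM T. \<forall>y\<in>optM T. mdist T (fc c x) (fc c y) \<le> optd T x y"
      proof -
      have cc: "mdist T c c = 0" using c by simp
      show ?thesis using bd c cc by (auto simp: optM_def fc_def simp del: mdist_zero)
    qed
    show "\<forall>p\<in>M0. fc c (SX p) = ST p" by (simp add: SX_def fc_def)
  qed
  have "\<forall>x\<in>mspace X. fc (ST (0,0)) x = fc (ST (1,0)) x"
    using fin sqX hom[OF ST_in[OF M00]] hom[OF ST_in[OF M10]] unfolding squams_final_wrt_def
    by blast
  moreover have "None \<in> mspace X" by (simp add: sp optM_def)
  ultimately show False using neq by (auto simp: fc_def)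
qed

end
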